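(* For every probabilistic single-item auction there exists an optimal (expected-revenue-maximizing) mixed signaling scheme in which, for every signal $S$ with $|\mathrm{supp}(S)|\ge 2$, the highest and second-highest bids are equal, i.e. $\sum_j\psi_{w_1(S),j}\varphi(j,S)=\sum_j\psi_{w_2(S),j}\varphi(j,S)$.
   Context: A probabilistic single-item auction: $n\ge 2$ bidders, $m$ item types with probabilities $p_j$, nonnegative valuations $v_{i,j}$; $\psi_{i,j}=p_jv_{i,j}$. A mixed signaling scheme is a finite signal set $\mathcal{S}$ and $\varphi:[m]\times\mathcal{S}\to[0,1]$ with $\sum_S\varphi(j,S)=1$ for each $j$; $\mathrm{supp}(S)=\{j:\varphi(j,S)>0\}$. Its expected revenue is $\sum_S\mathrm{max2}_i\{\sum_j\psi_{i,j}\varphi(j,S)\}$ ($\mathrm{max2}$ = second-largest entry with multiplicity). $w_1(S)$ and $w_2(S)$ are the bidders with the largest and second-largest value of $\sum_j\psi_{i,j}\varphi(j,S)$ (ties broken by a fixed priority order). Bids after signal $S$ are these quantities divided by the common factor $\sum_jp_j\varphi(j,S)$. *)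

theory Defs
  imports Complex_Main
begin

text \<open>Bidders are 0..<n, item types are 0..<m, signals are natural numbers
  (any finite signal set can be relabelled into nat).\<close>

definition psi :: "(nat \<Rightarrow> real) \<Rightarrow> (nat \<Rightarrow> nat \<Rightarrow> real) \<Rightarrow> nat \<Rightarrow> nat \<Rightarrow> real" where
  "psi p v i j = p j * v i j"

definition is_scheme :: "nat \<Rightarrow> nat set \<Rightarrow> (nat \<Rightarrow> nat \<Rightarrow> real) \<Rightarrow> bool" where
  "is_scheme m Sig phi \<longleftrightarrow> finite Sig
     \<and> (\<forall>j<m. \<forall>s\<in>Sig. 0 \<le> phi j s \<and> phi j s \<le> 1)
     \<and> (\<forall>j<m. (\<Sum>s\<in>Sig. phi j s) = 1)"

definition supp :: "nat \<Rightarrow> (nat \<Rightarrow> nat \<Rightarrow> real) \<Rightarrow> nat \<Rightarrow> nat set" where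
  "supp m phi s = {j. j < m \<and> phi j s > 0}"

definition sigval :: "nat \<Rightarrow> (nat \<Rightarrow> nat \<Rightarrow> real) \<Rightarrow> (nat \<Rightarrow> nat \<Rightarrow> real) \<Rightarrow> nat \<Rightarrow> nat \<Rightarrow> real" where
  "sigval m ps phi s i = (\<Sum>j<m. ps i j * phi j s)"

definition max2 :: "nat \<Rightarrow> (nat \<Rightarrow> real) \<Rightarrow> real" where
  "max2 n f = rev (sort (map f [0..<n])) ! 1"

definition revenue :: "nat \<Rightarrow> nat \<Rightarrow> (nat \<Rightarrow> nat \<Rightarrow> real) \<Rightarrow> nat set \<Rightarrow> (nat \<Rightarrow> nat \<Rightarrow> real) \<Rightarrow> real" where
  "revenue n m ps Sig phi = (\<Sum>s\<in>Sig. max2 n (sigval m ps phi s))"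

definition w1 :: "nat \<Rightarrow> (nat \<Rightarrow> real) \<Rightarrow> nat" where
  "w1 n f = (LEAST i. i < n \<and> (\<forall>k<n. f k \<le> f i))"

definition w2 :: "nat \<Rightarrow> (nat \<Rightarrow> real) \<Rightarrow> nat" where
  "w2 n f = (LEAST i. i < n \<and> i \<noteq> w1 n f \<and> (\<forall>k<n. k \<noteq> w1 n f \<longrightarrow> f k \<le> f i))"

end

theory Submission imports Defs "HOL-Combinatorics.List_Permutation" "HOL-Analysis.Analysis" begin


lemma max2_perm:
  obtains \<sigma> where "bij_betw \<sigma> {..<n} {..<n}" "\<forall>i<n. sort (map f [0..<n]) ! i = f (\<sigma> i)"
proof -
  have "sort (map f [0..<n]) <~~> map f [0..<n]" by simp
  from permutation_Ex_bij[OF this] obtain \<sigma> where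
    "bij_betw \<sigma> {..<n} {..<n}" "\<forall>i<n. sort (map f [0..<n]) ! i = map f [0..<n] ! (\<sigma> i)"
    by auto
  moreover have "\<forall>i<n. \<sigma> i < n" using \<open>bij_betw \<sigma> {..<n} {..<n}\<close> bij_betwE by blast
  ultimately show ?thesis using that by auto
qed

lemma max2_alt: assumes "n \<ge> 2" shows "max2 n f = sort (map f [0..<n]) ! (n-2)"
  using assms by (simp add: max2_def rev_nth numeral_2_eq_2)

lemma max2_ge:
  assumes "n \<ge> 2" "a < n" "b < n" "a \<noteq> b"
  shows "min (f a) (f b) \<le> max2 n f"
proof -
  obtain \<sigma> where bij: "bij_betw \<sigma> {..<n} {..<n}" and S: "\<forall>i<n. sort (map f [0..<n]) ! i = f (\<sigma> i)"
    by (rule max2_perm)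
  obtain i where i: "i < n" "\<sigma> i = a" using bij assms(2) by (metis bij_betw_iff_bijections lessThan_iff)
  obtain i' where i': "i' < n" "\<sigma> i' = b" using bij assms(3) by (metis bij_betw_iff_bijections lessThan_iff)
  have "i \<noteq> i'" using i i' assms(4) by auto
  let ?S = "sort (map f [0..<n])"
  have len: "length ?S = n" by simp
  have mono: "\<And>k. k \<le> n - 2 \<Longrightarrow> ?S ! k \<le> ?S ! (n-2)"
    using sorted_nth_mono[OF sorted_sort] len assms(1) by (metis diff_less le_less_trans less_le_trans zero_less_numeral not_less)
  show ?thesis
  proof (cases "i \<le> n - 2")
    case True
    then have "f a \<le> max2 n f" using mono[OF True] S i max2_alt[OF assms(1)] by metis
    then show ?thesis by linarith
  next
    case False
    then have "i' \<le> n - 2" using \<open>i \<noteq> i'\<close> i i' by linarith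
    then have "f b \<le> max2 n f" using mono S i' max2_alt[OF assms(1)] by metis
    then show ?thesis by linarith
  qed
qed

lemma max2_attained:
  assumes "n \<ge> 2"
  shows "\<exists>a b. a < n \<and> b < n \<and> a \<noteq> b \<and> max2 n f = min (f a) (f b)"
proof -
  obtain \<sigma> where bij: "bij_betw \<sigma> {..<n} {..<n}" and S: "\<forall>i<n. sort (map f [0..<n]) ! i = f (\<sigma> i)"
    by (rule max2_perm)
  let ?S = "sort (map f [0..<n])"
  have le: "?S ! (n-2) \<le> ?S ! (n-1)"
    using sorted_nth_mono[OF sorted_sort, of "n-2" "n-1" "map f [0..<n]"] assms by simp
  have inj: "inj_on \<sigma> {..<n}" using bij by (rule bij_betw_imp_inj_on)
  have d: "\<sigma> (n-2) \<noteq> \<sigma> (n-1)"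
  proof
    assume "\<sigma> (n-2) = \<sigma> (n-1)"
    then have "n-2 = n-1" using inj_onD[OF inj] assms by simp
    then show False using assms by simp
  qed
  have r: "\<sigma> (n-2) < n" "\<sigma> (n-1) < n" using bij assms bij_betwE by fastforce+
  show ?thesis
    using d r le S assms max2_alt[OF assms] by (intro exI[of _ "\<sigma> (n-2)"] exI[of _ "\<sigma> (n-1)"]) auto
qed

lemma ex_argmax: "finite A \<Longrightarrow> A \<noteq> {} \<Longrightarrow> \<exists>i\<in>A. \<forall>k\<in>A. (f::nat\<Rightarrow>real) k \<le> f i"
proof -
  assume a: "finite A" "A \<noteq> {}"
  have "Max (f ` A) \<in> f ` A" using a by (intro Max_in) auto
  then obtain i where i: "i \<in> A" "f i = Max (f ` A)" by auto
  have "\<forall>k\<in>A. f k \<le> f i" using a i by auto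
  then show ?thesis using i by blast
qed

lemma w1_prop: assumes "n \<ge> 1" shows "w1 n f < n \<and> (\<forall>k<n. f k \<le> f (w1 n f))"
proof -
  obtain i where "i \<in> {..<n}" "\<forall>k\<in>{..<n}. f k \<le> f i" using ex_argmax[of "{..<n}" f] assms by fastforce
  then have "\<exists>i. i < n \<and> (\<forall>k<n. f k \<le> f i)" by auto
  from LeastI_ex[OF this] show ?thesis unfolding w1_def by blast
qed

lemma w2_prop: assumes "n \<ge> 2"
  shows "w2 n f < n \<and> w2 n f \<noteq> w1 n f \<and> (\<forall>k<n. k \<noteq> w1 n f \<longrightarrow> f k \<le> f (w2 n f))"
proof -
  have "(if w1 n f = 0 then 1 else 0) \<in> {..<n} - {w1 n f}" using assms by auto
  then have "{..<n} - {w1 n f} \<noteq> {}" by blast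
  then obtain i where "i \<in> {..<n} - {w1 n f}" "\<forall>k\<in>{..<n} - {w1 n f}. f k \<le> f i"
    using ex_argmax[of "{..<n} - {w1 n f}" f] by fastforce
  then have "\<exists>i. i < n \<and> i \<noteq> w1 n f \<and> (\<forall>k<n. k \<noteq> w1 n f \<longrightarrow> f k \<le> f i)" by auto
  from LeastI_ex[OF this] show ?thesis unfolding w2_def by blast
qed

lemma max2_w2: assumes "n \<ge> 2" shows "max2 n f = f (w2 n f)"
proof -
  have w1: "w1 n f < n" "\<forall>k<n. f k \<le> f (w1 n f)" using w1_prop[of n f] assms by auto
  have w2: "w2 n f < n" "w2 n f \<noteq> w1 n f" "\<forall>k<n. k \<noteq> w1 n f \<longrightarrow> f k \<le> f (w2 n f)"
    using w2_prop[OF assms] by auto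
  have "min (f (w1 n f)) (f (w2 n f)) \<le> max2 n f" using max2_ge[OF assms w1(1) w2(1)] w2(2) by auto
  then have 1: "f (w2 n f) \<le> max2 n f" using w1 w2 by auto
  obtain a b where ab: "a < n" "b < n" "a \<noteq> b" "max2 n f = min (f a) (f b)" using max2_attained[OF assms] by blast
  have "max2 n f \<le> f (w2 n f)"
  proof (cases "a = w1 n f")
    case True then show ?thesis using ab w2 by (metis min.coboundedI2)
  next
    case False then show ?thesis using ab w2 by (metis min.coboundedI1)
  qed
  with 1 show ?thesis by linarith
qed



lemma min_mult_nonneg: "0 \<le> (c::real) \<Longrightarrow> min x y * c = min (x*c) (y*c)"
proof (cases "x \<le> y")
  assume c: "0 \<le> c"
  case True then have "x*c \<le> y*c" using c by (rule mult_right_mono)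
  then show ?thesis using True by (simp add: min.absorb1)
next
  assume c: "0 \<le> c"
  case False then have "y*c \<le> x*c" using c by (intro mult_right_mono) auto
  then show ?thesis using False by (simp add: min.absorb2)
qed

lemma cont_coord: "continuous_on S (\<lambda>z::nat\<Rightarrow>nat\<Rightarrow>real. z k r)"
proof -
  have 1: "continuous_on UNIV (\<lambda>z::nat\<Rightarrow>nat\<Rightarrow>real. z k)" by simp
  have 2: "continuous_on UNIV (\<lambda>w::nat\<Rightarrow>real. w r)" by simp
  have "continuous_on UNIV (\<lambda>z::nat\<Rightarrow>nat\<Rightarrow>real. z k r)"
    using continuous_on_compose2[OF 2 1] by simp
  then show ?thesis using continuous_on_subset by blast
qed

locale auc =
  fixes n m :: nat and ps :: "nat \<Rightarrow> nat \<Rightarrow> real"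
  assumes n2: "n \<ge> 2" and psnn: "\<And>i j. i < n \<Longrightarrow> j < m \<Longrightarrow> ps i j \<ge> 0"
begin

definition "NN = n*n + m"
definition allowed where "allowed k r \<longleftrightarrow> k < m \<and> r < NN \<and> (n*n \<le> r \<longrightarrow> r = n*n + k)"
definition KK :: "(nat \<Rightarrow> nat \<Rightarrow> real) set" where
  "KK = {z. (\<forall>k r. 0 \<le> z k r) \<and> (\<forall>k r. \<not> allowed k r \<longrightarrow> z k r = 0) \<and> (\<forall>k<m. (\<Sum>r<NN. z k r) = 1)}"
definition L where "L i u = (\<Sum>k<m. ps i k * u k)"
definition mj where "mj j = max2 n (\<lambda>i. ps i j)"
definition cval where
  "cval r u = (if r < n*n then (if r div n \<noteq> r mod n then min (L (r div n) u) (L (r mod n) u) else 0)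
               else mj (r - n*n) * u (r - n*n))"
definition FF where "FF z = (\<Sum>r<NN. cval r (\<lambda>k. z k r))"
definition PP :: "(nat \<Rightarrow> nat \<Rightarrow> real) \<Rightarrow> real" where "PP z = (\<Sum>j<m. z j (n*n+j))"

lemma sigval_L: "sigval m ps z r i = L i (\<lambda>k. z k r)" by (simp add: sigval_def L_def)

lemma L_add: "L i (\<lambda>k. u k + w k) = L i u + L i w" by (simp add: L_def sum.distrib distrib_left)

lemma cval_super: "cval r u + cval r w \<le> cval r (\<lambda>k. u k + w k)"
  unfolding cval_def L_add by (simp add: min_def distrib_left)

lemma cval_zero: "cval r (\<lambda>k. 0) = 0" by (simp add: cval_def L_def)

lemma div_mod_lt: "r < n*n \<Longrightarrow> r div n < n \<and> r mod n < n"
  using n2 by (simp add: less_mult_imp_div_less)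

lemma pair_code: assumes "a < n" "b < n" shows "(a*n+b) div n = a \<and> (a*n+b) mod n = b \<and> a*n+b < n*n"
proof -
  have "a*n+b < (a+1)*n" using assms by simp
  also have "\<dots> \<le> n*n" using assms by (intro mult_le_mono1) simp
  finally show ?thesis using assms by simp
qed

lemma KK_le1: "z \<in> KK \<Longrightarrow> k < m \<Longrightarrow> r < NN \<Longrightarrow> z k r \<le> 1"
  unfolding KK_def using member_le_sum[of r "{..<NN}" "\<lambda>r. z k r"] by auto

lemma L_nonneg: "z \<in> KK \<Longrightarrow> i < n \<Longrightarrow> 0 \<le> L i (\<lambda>k. z k r)"
  unfolding L_def KK_def by (auto intro!: sum_nonneg mult_nonneg_nonneg psnn)

lemma cval_le: assumes z: "z \<in> KK" and r: "r < NN"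
  shows "cval r (\<lambda>k. z k r) \<le> max2 n (sigval m ps z r)"
proof -
  have sv: "sigval m ps z r = (\<lambda>i. L i (\<lambda>k. z k r))" by (rule ext) (simp add: sigval_L)
  show ?thesis
  proof (cases "r < n*n")
    case True
    have ab: "r div n < n" "r mod n < n" using div_mod_lt[OF True] by auto
    show ?thesis
    proof (cases "r div n \<noteq> r mod n")
      case True2: True
      show ?thesis unfolding sv using max2_ge[OF n2 ab True2, of "\<lambda>i. L i (\<lambda>k. z k r)"] True True2
        by (simp add: cval_def)
    next
      case False
      have "min (L 0 (\<lambda>k. z k r)) (L 1 (\<lambda>k. z k r)) \<le> max2 n (\<lambda>i. L i (\<lambda>k. z k r))"
        using max2_ge[OF n2, of 0 1] n2 by auto
      moreover have "0 \<le> min (L 0 (\<lambda>k. z k r)) (L 1 (\<lambda>k. z k r))" using L_nonneg[OF z] n2 by auto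
      ultimately have "0 \<le> max2 n (\<lambda>i. L i (\<lambda>k. z k r))" by (rule order_trans[rotated])
      then show ?thesis unfolding sv using True False by (simp add: cval_def)
    qed
  next
    case False
    define j where "j = r - n*n"
    have j: "j < m" "r = n*n + j" using False r unfolding j_def NN_def by auto
    have zk: "\<And>k. k \<noteq> j \<Longrightarrow> z k r = 0" using z j unfolding KK_def allowed_def by auto
    have Lj: "\<And>i. L i (\<lambda>k. z k r) = ps i j * z j r"
    proof -
      fix i
      have "L i (\<lambda>k. z k r) = (\<Sum>k\<in>{..<m}. if k = j then ps i j * z j r else 0)"
        unfolding L_def by (rule sum.cong) (auto simp: zk)
      then show "L i (\<lambda>k. z k r) = ps i j * z j r" using j by simp
    qed
    obtain a b where ab: "a < n" "b < n" "a \<noteq> b" "max2 n (\<lambda>i. ps i j) = min (ps a j) (ps b j)"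
      using max2_attained[OF n2] by blast
    have zn: "0 \<le> z j r" using z unfolding KK_def by auto
    have "cval r (\<lambda>k. z k r) = min (ps a j * z j r) (ps b j * z j r)"
      using False ab(4) min_mult_nonneg[OF zn] by (simp add: cval_def mj_def j_def)
    also have "\<dots> \<le> max2 n (\<lambda>i. ps i j * z j r)" using max2_ge[OF n2 ab(1-3), of "\<lambda>i. ps i j * z j r"] by simp
    finally show ?thesis unfolding sv Lj .
  qed
qed

lemma F_le_rev: "z \<in> KK \<Longrightarrow> FF z \<le> revenue n m ps {..<NN} z"
  unfolding FF_def revenue_def by (rule sum_mono) (simp add: cval_le)

lemma cont_cval: "continuous_on S (\<lambda>z::nat\<Rightarrow>nat\<Rightarrow>real. cval r (\<lambda>k. z k r))"
  by (cases "r < n*n"; cases "r div n \<noteq> r mod n"; simp add: cval_def L_def;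
      intro continuous_on_min continuous_on_sum continuous_on_mult continuous_on_const cont_coord)

lemma cont_F: "continuous_on S FF"
  unfolding FF_def by (intro continuous_on_sum cont_cval)

lemma cont_P: "continuous_on S PP"
  unfolding PP_def by (intro continuous_on_sum cont_coord)

lemma KK_compact: "compact KK"
proof -
  have c1: "compact (PiE UNIV (\<lambda>_::nat. {0..1::real}))"
    using compactin_PiE[of "\<lambda>_. euclidean" UNIV "\<lambda>_::nat. {0..1::real}"]
    by (simp add: euclidean_product_topology)
  have c2: "compact (PiE UNIV (\<lambda>_::nat. PiE UNIV (\<lambda>_::nat. {0..1::real})))"
    using compactin_PiE[of "\<lambda>_. euclidean" UNIV "\<lambda>_::nat. PiE UNIV (\<lambda>_::nat. {0..1::real})"] c1
    by (simp add: euclidean_product_topology)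
  define C where "C = (\<Inter>k. \<Inter>r. {z::nat\<Rightarrow>nat\<Rightarrow>real. 0 \<le> z k r})
     \<inter> (\<Inter>k. \<Inter>r. {z::nat\<Rightarrow>nat\<Rightarrow>real. z k r * (if allowed k r then 0 else 1) = 0})
     \<inter> (\<Inter>k\<in>{..<m}. {z::nat\<Rightarrow>nat\<Rightarrow>real. (\<Sum>r<NN. z k r) = 1})"
  have "closed C" unfolding C_def
    by (intro closed_Int closed_INT ballI closed_Collect_le closed_Collect_eq continuous_on_const continuous_on_mult
       cont_coord continuous_on_sum)
  moreover have "KK = PiE UNIV (\<lambda>_::nat. PiE UNIV (\<lambda>_::nat. {0..1::real})) \<inter> C"
  proof (intro set_eqI iffI)
    fix z assume z: "z \<in> KK"
    have "z k r \<in> {0..1}" for k r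
    proof (cases "allowed k r")
      case True then show ?thesis using z KK_le1[OF z] unfolding KK_def allowed_def by auto
    next
      case False then show ?thesis using z unfolding KK_def by auto
    qed
    then show "z \<in> PiE UNIV (\<lambda>_::nat. PiE UNIV (\<lambda>_::nat. {0..1::real})) \<inter> C"
      using z unfolding C_def KK_def by auto
  next
    fix z assume "z \<in> PiE UNIV (\<lambda>_::nat. PiE UNIV (\<lambda>_::nat. {0..1::real})) \<inter> C"
    then show "z \<in> KK" unfolding C_def KK_def by (auto split: if_splits)
  qed
  ultimately show ?thesis using c2 by (simp add: compact_Int_closed)
qed

lemma KK_ne: "KK \<noteq> {}"
proof -
  define z where "z k r = (if k < m \<and> r = n*n+k then 1 else (0::real))" for k r
  have "z \<in> KK" unfolding KK_def
  proof (intro CollectI conjI allI impI)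
    fix k r show "0 \<le> z k r" by (simp add: z_def)
  next
    fix k r assume "\<not> allowed k r" then show "z k r = 0" by (auto simp: z_def allowed_def NN_def)
  next
    fix k assume k: "k < m"
    have "(\<Sum>r<NN. z k r) = (\<Sum>r<NN. if r = n*n+k then 1 else 0)" using k by (simp add: z_def)
    also have "\<dots> = 1" using k by (simp add: NN_def)
    finally show "(\<Sum>r<NN. z k r) = 1" .
  qed
  then show ?thesis by auto
qed

end

context auc begin

lemma rev_le_F:
  assumes sch: "is_scheme m Sig' phi'"
  shows "\<exists>z\<in>KK. revenue n m ps Sig' phi' \<le> FF z"
proof -
  have fin: "finite Sig'" and nn: "\<And>j s. j < m \<Longrightarrow> s \<in> Sig' \<Longrightarrow> 0 \<le> phi' j s"
    and sums: "\<And>j. j < m \<Longrightarrow> (\<Sum>s\<in>Sig'. phi' j s) = 1"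
    using sch unfolding is_scheme_def by auto
  define f where "f s = sigval m ps phi' s" for s
  have "\<forall>s. \<exists>ab. fst ab < n \<and> snd ab < n \<and> fst ab \<noteq> snd ab \<and> max2 n (f s) = min (f s (fst ab)) (f s (snd ab))"
    using max2_attained[OF n2] by fastforce
  then obtain AB where AB: "\<And>s. fst (AB s) < n \<and> snd (AB s) < n \<and> fst (AB s) \<noteq> snd (AB s)
      \<and> max2 n (f s) = min (f s (fst (AB s))) (f s (snd (AB s)))" by metis
  define \<pi> where "\<pi> s = fst (AB s) * n + snd (AB s)" for s
  have \<pi>: "\<pi> s < n*n" "\<pi> s div n = fst (AB s)" "\<pi> s mod n = snd (AB s)" for s
    using pair_code[of "fst (AB s)" "snd (AB s)"] AB[of s] unfolding \<pi>_def by auto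
  define z where "z k r = (if k < m \<and> r < n*n then \<Sum>s\<in>{s\<in>Sig'. \<pi> s = r}. phi' k s else 0)" for k r
  have sub: "{..<n*n} \<subseteq> {..<NN}" by (auto simp: NN_def)
  have zK: "z \<in> KK" unfolding KK_def
  proof (intro CollectI conjI allI impI)
    fix k r show "0 \<le> z k r" unfolding z_def using nn by (auto intro!: sum_nonneg)
  next
    fix k r assume "\<not> allowed k r" then show "z k r = 0" unfolding z_def allowed_def NN_def by auto
  next
    fix k assume k: "k < m"
    have "(\<Sum>r<NN. z k r) = (\<Sum>r<n*n. z k r)"
      by (rule sum.mono_neutral_right) (auto simp: z_def NN_def)
    also have "\<dots> = (\<Sum>r<n*n. \<Sum>s\<in>{s\<in>Sig'. \<pi> s = r}. phi' k s)" using k by (simp add: z_def)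
    also have "\<dots> = (\<Sum>s\<in>Sig'. phi' k s)" using fin \<pi>(1) by (intro sum.group) auto
    finally show "(\<Sum>r<NN. z k r) = 1" using sums k by simp
  qed
  have "revenue n m ps Sig' phi' = (\<Sum>s\<in>Sig'. max2 n (f s))" unfolding revenue_def f_def ..
  also have "\<dots> = (\<Sum>r<n*n. \<Sum>s\<in>{s\<in>Sig'. \<pi> s = r}. max2 n (f s))"
    using fin \<pi>(1) by (intro sum.group[symmetric]) auto
  also have "\<dots> \<le> (\<Sum>r<n*n. cval r (\<lambda>k. z k r))"
  proof (rule sum_mono)
    fix r assume r: "r \<in> {..<n*n}"
    let ?F = "{s\<in>Sig'. \<pi> s = r}"
    show "(\<Sum>s\<in>?F. max2 n (f s)) \<le> cval r (\<lambda>k. z k r)"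
    proof (cases "r div n \<noteq> r mod n")
      case True
      have Lx: "L i (\<lambda>k. z k r) = (\<Sum>s\<in>?F. f s i)" for i
      proof -
        have "L i (\<lambda>k. z k r) = (\<Sum>k<m. ps i k * (\<Sum>s\<in>?F. phi' k s))"
          unfolding L_def using r by (intro sum.cong) (auto simp: z_def)
        also have "\<dots> = (\<Sum>k<m. \<Sum>s\<in>?F. ps i k * phi' k s)" by (simp add: sum_distrib_left)
        also have "\<dots> = (\<Sum>s\<in>?F. \<Sum>k<m. ps i k * phi' k s)" by (rule sum.swap)
        finally show ?thesis by (simp add: f_def sigval_def)
      qed
      have "s \<in> ?F \<Longrightarrow> fst (AB s) = r div n \<and> snd (AB s) = r mod n" for s using \<pi> by auto
      then have le: "s \<in> ?F \<Longrightarrow> max2 n (f s) \<le> f s (r div n) \<and> max2 n (f s) \<le> f s (r mod n)" for s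
        using AB[of s] by auto
      have "(\<Sum>s\<in>?F. max2 n (f s)) \<le> (\<Sum>s\<in>?F. f s (r div n))" using le by (intro sum_mono) auto
      moreover have "(\<Sum>s\<in>?F. max2 n (f s)) \<le> (\<Sum>s\<in>?F. f s (r mod n))" using le by (intro sum_mono) auto
      ultimately show ?thesis using True r by (simp add: cval_def Lx)
    next
      case False
      have e: "?F = {}" using \<pi> AB False by fastforce
      show ?thesis unfolding e using False r by (simp add: cval_def)
    qed
  qed
  also have "\<dots> = FF z" unfolding FF_def
    by (rule sum.mono_neutral_left) (auto simp: z_def NN_def cval_def)
  finally show ?thesis using zK by blast
qed

end

context auc begin

lemma prop_lemma:
  assumes z0K: "z0 \<in> KK" and Fmax: "\<forall>w\<in>KK. FF w \<le> FF z0"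
    and Pmax: "\<forall>w\<in>KK. FF w = FF z0 \<longrightarrow> PP w \<le> PP z0"
    and s: "s < NN" and card: "card (supp m z0 s) \<ge> 2"
  shows "sigval m ps z0 s (w1 n (sigval m ps z0 s)) = sigval m ps z0 s (w2 n (sigval m ps z0 s))"
proof (rule ccontr)
  define f where "f = sigval m ps z0 s"
  define a where "a = w1 n f"
  define b where "b = w2 n f"
  assume "\<not> ?thesis"
  then have ne: "f a \<noteq> f b" unfolding f_def a_def b_def .
  have a: "a < n" "\<forall>k<n. f k \<le> f a" using w1_prop[of n f] n2 unfolding a_def by auto
  have b: "b < n" "b \<noteq> a" using w2_prop[OF n2, of f] unfolding a_def b_def by auto
  have gt: "f b < f a" using a b ne by force
  have z0: "\<And>k r. 0 \<le> z0 k r" "\<And>k r. \<not> allowed k r \<Longrightarrow> z0 k r = 0" "\<And>k. k < m \<Longrightarrow> (\<Sum>r<NN. z0 k r) = 1"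
    using z0K unfolding KK_def by auto
  have sn: "s < n*n"
  proof (rule ccontr)
    assume "\<not> s < n*n"
    assume ns: "\<not> s < n*n"
    have "i \<in> {s - n*n}" if i: "i \<in> supp m z0 s" for i
    proof -
      have "z0 i s \<noteq> 0" using i unfolding supp_def by auto
      then have "allowed i s" using z0(2) by blast
      then show ?thesis using ns unfolding allowed_def by auto
    qed
    then have "supp m z0 s \<subseteq> {s - n*n}" by blast
    then have "card (supp m z0 s) \<le> 1" using card_mono[of "{s - n*n}"] by fastforce
    then show False using card by simp
  qed
  define x where "x k = z0 k s" for k
  have fx: "f i = L i x" for i unfolding f_def x_def by (simp add: sigval_L)
  have "(\<Sum>k<m. (ps a k - ps b k) * x k) = f a - f b"
    unfolding fx L_def by (simp add: sum_subtractf left_diff_distrib)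
  then obtain j where j: "j < m" "(ps a j - ps b j) * x j > 0"
  proof -
    assume h: "\<And>j. j < m \<Longrightarrow> 0 < (ps a j - ps b j) * x j \<Longrightarrow> thesis"
    show thesis
    proof (rule ccontr)
      assume "\<not> thesis"
      then have "\<forall>j<m. (ps a j - ps b j) * x j \<le> 0" using h by force
      then have "(\<Sum>k<m. (ps a k - ps b k) * x k) \<le> 0" by (intro sum_nonpos) auto
      then show False using \<open>(\<Sum>k<m. (ps a k - ps b k) * x k) = f a - f b\<close> gt by linarith
    qed
  qed
  have xj: "x j > 0" and pj: "ps a j > ps b j"
    using j z0(1)[of j s] unfolding x_def by (auto simp: zero_less_mult_iff)
  define \<delta> where "\<delta> = min (x j) ((f a - f b) / (ps a j - ps b j))"
  have dpos: "\<delta> > 0" using xj pj gt unfolding \<delta>_def by auto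
  have dle: "\<delta> \<le> x j" unfolding \<delta>_def by simp
  have dle2: "\<delta> * (ps a j - ps b j) \<le> f a - f b"
  proof -
    have "\<delta> \<le> (f a - f b) / (ps a j - ps b j)" unfolding \<delta>_def by simp
    then show ?thesis using pj by (simp add: pos_le_divide_eq)
  qed
  define t where "t = a*n+b"
  define p where "p = n*n+j"
  have t: "t < n*n" "t div n = a" "t mod n = b" using pair_code[OF a(1) b(1)] unfolding t_def by auto
  have p: "p < NN" "p \<noteq> s" "p \<noteq> t" "p - n*n = j" "\<not> p < n*n" using j sn t unfolding p_def NN_def by auto
  have tN: "t < NN" using t unfolding NN_def by auto
  define x' where "x' k = x k - (if k = j then \<delta> else 0)" for k
  define z' where "z' k r = z0 k r - (if r = s then x k else 0) + (if r = t then x' k else 0)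
      + (if r = p \<and> k = j then \<delta> else 0)" for k r
  have xnn: "0 \<le> x' k" for k using dle z0(1)[of k s] unfolding x'_def x_def by auto
  have z'K: "z' \<in> KK" unfolding KK_def
  proof (intro CollectI conjI allI impI)
    fix k r show "0 \<le> z' k r"
      using z0(1)[of k r] xnn[of k] dpos unfolding z'_def x_def by (auto)
  next
    fix k r assume al: "\<not> allowed k r"
    have "k \<ge> m \<or> r \<ge> NN \<or> (n*n \<le> r \<and> r \<noteq> n*n+k)" using al unfolding allowed_def by auto
    moreover have "\<not> allowed k s \<Longrightarrow> x k = 0" unfolding x_def using z0(2) .
    moreover have "r = t \<Longrightarrow> \<not> allowed k s" using al t tN s unfolding allowed_def by auto
    ultimately show "z' k r = 0" using z0(2)[OF al] j t p unfolding z'_def x'_def p_def by (auto simp: x_def)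
  next
    fix k assume k: "k < m"
    have "(\<Sum>r<NN. z' k r) = (\<Sum>r<NN. z0 k r) - (\<Sum>r<NN. if r = s then x k else 0)
        + (\<Sum>r<NN. if r = t then x' k else 0) + (\<Sum>r<NN. if r = p \<and> k = j then \<delta> else 0)"
      unfolding z'_def by (simp add: sum.distrib sum_subtractf)
    also have "\<dots> = 1 - x k + x' k + (if k = j then \<delta> else 0)"
      using s tN p(1) z0(3)[OF k] by simp
    also have "\<dots> = 1" unfolding x'_def by simp
    finally show "(\<Sum>r<NN. z' k r) = 1" .
  qed
  have "PP z' = (\<Sum>i<m. z0 i (n*n+i) + (if i = j then \<delta> else 0))"
    unfolding PP_def z'_def p_def using sn t by (intro sum.cong) auto
  also have "\<dots> = PP z0 + \<delta>" using j by (simp add: sum.distrib PP_def)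
  finally have Pz': "PP z' = PP z0 + \<delta>" .
  define R where "R r = (if r = p then \<delta> * mj j else 0) + (if r = t then cval t x' else 0)
      - (if r = s then cval s x else 0)" for r
  have D: "R r \<le> cval r (\<lambda>k. z' k r) - cval r (\<lambda>k. z0 k r)" for r
  proof -
    consider "r = p" | "r \<noteq> p" "r = s" "r = t" | "r \<noteq> p" "r = s" "r \<noteq> t" | "r \<noteq> p" "r \<noteq> s" "r = t"
      | "r \<noteq> p" "r \<noteq> s" "r \<noteq> t" by blast
    then show ?thesis
    proof cases
      case 1
      then have "(\<lambda>k. z' k r) = (\<lambda>k. z0 k p + (if k = j then \<delta> else 0))" using p unfolding z'_def by auto
      then show ?thesis using 1 p unfolding R_def by (simp add: cval_def algebra_simps)
    next
      case 2
      then have "(\<lambda>k. z' k r) = x'" unfolding z'_def x_def by auto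
      then show ?thesis using 2 unfolding R_def x_def by simp
    next
      case 3
      then have "(\<lambda>k. z' k r) = (\<lambda>k. 0)" unfolding z'_def x_def by auto
      then show ?thesis using 3 unfolding R_def x_def by (simp add: cval_zero)
    next
      case 4
      then have "(\<lambda>k. z' k r) = (\<lambda>k. z0 k t + x' k)" unfolding z'_def by auto
      then show ?thesis using 4 cval_super[of t "\<lambda>k. z0 k t" x'] unfolding R_def by simp
    next
      case 5
      then have "(\<lambda>k. z' k r) = (\<lambda>k. z0 k r)" unfolding z'_def by auto
      then show ?thesis using 5 unfolding R_def by simp
    qed
  qed
  have sumR: "(\<Sum>r<NN. R r) = \<delta> * mj j + cval t x' - cval s x"
    unfolding R_def using p(1) tN s by (simp add: sum.distrib sum_subtractf)
  have "cval s x \<le> max2 n f" using cval_le[OF z0K s] unfolding f_def x_def .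
  also have "\<dots> = f b" unfolding f_def b_def by (rule max2_w2[OF n2])
  finally have c1: "cval s x \<le> f b" .
  have Lx': "L i x' = L i x - ps i j * \<delta>" for i
  proof -
    have "L i x' = (\<Sum>k<m. ps i k * x k - (if k = j then ps i j * \<delta> else 0))"
      unfolding L_def x'_def by (intro sum.cong) (auto simp: algebra_simps)
    also have "\<dots> = L i x - ps i j * \<delta>" using j by (simp add: sum_subtractf L_def)
    finally show ?thesis .
  qed
  have La: "L a x' = f a - ps a j * \<delta>" and Lb: "L b x' = f b - ps b j * \<delta>"
    unfolding fx Lx' by simp_all
  have "cval t x' = min (L a x') (L b x')" using t b by (simp add: cval_def)
  also have "\<dots> = f b - ps b j * \<delta>" using La Lb dle2 by (simp add: min_def algebra_simps)
  finally have c2: "cval t x' = f b - ps b j * \<delta>" .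
  have "min (ps a j) (ps b j) \<le> mj j" unfolding mj_def using max2_ge[OF n2 a(1) b(1)] b(2) by auto
  then have c3: "ps b j \<le> mj j" using pj by simp
  have "\<delta> * ps b j \<le> \<delta> * mj j" using c3 dpos by (intro mult_left_mono) auto
  then have "0 \<le> (\<Sum>r<NN. R r)" unfolding sumR c2 using c1 by (simp add: algebra_simps)
  also have "\<dots> \<le> (\<Sum>r<NN. cval r (\<lambda>k. z' k r) - cval r (\<lambda>k. z0 k r))" by (rule sum_mono) (rule D)
  also have "\<dots> = FF z' - FF z0" unfolding FF_def by (simp add: sum_subtractf)
  finally have "FF z0 \<le> FF z'" by simp
  then have "FF z' = FF z0" using Fmax z'K by force
  then have "PP z' \<le> PP z0" using Pmax z'K by blast
  then show False using Pz' dpos by simp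
qed

end
context auc begin

lemma main_auc:
  "\<exists>Sig phi. is_scheme m Sig phi
     \<and> (\<forall>Sig' phi'. is_scheme m Sig' phi' \<longrightarrow> revenue n m ps Sig' phi' \<le> revenue n m ps Sig phi)
     \<and> (\<forall>s\<in>Sig. card (supp m phi s) \<ge> 2 \<longrightarrow>
            sigval m ps phi s (w1 n (sigval m ps phi s)) = sigval m ps phi s (w2 n (sigval m ps phi s)))"
proof -
  obtain zF where zF: "zF \<in> KK" "\<forall>w\<in>KK. FF w \<le> FF zF"
    using continuous_attains_sup[OF KK_compact KK_ne cont_F] by blast
  define KS where "KS = KK \<inter> {z. FF z = FF zF}"
  have "closed {z. FF z = FF zF}" by (intro closed_Collect_eq cont_F continuous_on_const)
  then have cKS: "compact KS" unfolding KS_def using KK_compact by (simp add: compact_Int_closed)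
  have "KS \<noteq> {}" using zF unfolding KS_def by auto
  then obtain z0 where z0: "z0 \<in> KS" "\<forall>w\<in>KS. PP w \<le> PP z0"
    using continuous_attains_sup[OF cKS _ cont_P] by blast
  have z0K: "z0 \<in> KK" and Fz0: "FF z0 = FF zF" using z0 unfolding KS_def by auto
  have Fmax: "\<forall>w\<in>KK. FF w \<le> FF z0" using zF Fz0 by simp
  have Pmax: "\<forall>w\<in>KK. FF w = FF z0 \<longrightarrow> PP w \<le> PP z0" using z0 Fz0 unfolding KS_def by auto
  have sch: "is_scheme m {..<NN} z0"
    unfolding is_scheme_def using z0K KK_le1[OF z0K] unfolding KK_def by auto
  have opt: "revenue n m ps Sig' phi' \<le> revenue n m ps {..<NN} z0" if sc: "is_scheme m Sig' phi'" for Sig' phi'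
  proof -
    obtain w where w: "w \<in> KK" "revenue n m ps Sig' phi' \<le> FF w" using rev_le_F[OF sc] by blast
    have "FF w \<le> FF z0" using Fmax w by blast
    also have "\<dots> \<le> revenue n m ps {..<NN} z0" by (rule F_le_rev[OF z0K])
    finally show ?thesis using w by simp
  qed
  show ?thesis
    using sch opt prop_lemma[OF z0K Fmax Pmax] by (intro exI[of _ "{..<NN}"] exI[of _ z0]) auto
qed

end

theorem mainTheorem8:
  fixes n m :: nat and p :: "nat \<Rightarrow> real" and v :: "nat \<Rightarrow> nat \<Rightarrow> real"
  assumes "n \<ge> 2"
    and "\<forall>j<m. p j \<ge> 0"
    and "(\<Sum>j<m. p j) = 1"
    and "\<forall>i<n. \<forall>j<m. v i j \<ge> 0"
  shows "\<exists>Sig phi. is_scheme m Sig phi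
     \<and> (\<forall>Sig' phi'. is_scheme m Sig' phi' \<longrightarrow>
            revenue n m (psi p v) Sig' phi' \<le> revenue n m (psi p v) Sig phi)
     \<and> (\<forall>s\<in>Sig. card (supp m phi s) \<ge> 2 \<longrightarrow>
            sigval m (psi p v) phi s (w1 n (sigval m (psi p v) phi s))
          = sigval m (psi p v) phi s (w2 n (sigval m (psi p v) phi s)))"
proof -
  interpret auc n m "psi p v"
    by unfold_locales (use assms in \<open>auto simp: psi_def\<close>)
  show ?thesis by (rule main_auc)
qed

end
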